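(* Let $K$ be an infinite field and let $\mathcal{A} \subseteq (\mathbb{Z}_{\ge 0})^n$ be a support set all of whose elements are monomials of the same type. Let $G \subseteq S_n$ be a subgroup acting transitively on the set of all monomials of this type. Then for general coefficients of $f \in K^{\mathcal{A}}$ with respect to $\mathcal{A}$, the ideal $(G.f) \subseteq K[x_1,\dots,x_n]$ is a monomial ideal, and it is generated by the orbit $G.m$ of any monomial $m$ occurring in $f$ (equivalently, it is generated by all monomials of this type).
   Context: A support set is a non-empty finite subset $\mathcal{A}\subseteq(\mathbb{Z}_{\ge0})^n$; monomials are identified with exponent vectors. The type of a monomial is the partition of its degree obtained by listing its exponents in decreasing order; two monomials have the same type iff they are permutations of each other. $K^{\mathcal{A}}$ is identified with the polynomials whose support is contained in $\mathcal{A}$. $S_n$ acts by $\sigma.x_i = x_{\sigma(i)}$; $G.f$ is the orbit of $f$ and $(G.f)$ the ideal generated by it. "For general coefficients of $f$ with respect to $\mathcal{A}$" means: the set of $f\in K^{\mathcal{A}}$ for which the assertion holds contains a non-empty Zariski-open subset of $K^{\mathcal{A}}$. *)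

theory Defs
  imports "HOL-Library.Poly_Mapping" "HOL-Combinatorics.Permutations"
begin

text \<open>Polynomials in K[x_0,...,x_{n-1}] are represented as
 polynomial maps from exponent vectors to coefficients (exponent vectors to coefficients); exponent vectors
 with Poly_Mapping.keys in {..<n} are the monomials in n variables.\<close>

type_synonym 'k mpoly = "(nat \<Rightarrow>\<^sub>0 nat) \<Rightarrow>\<^sub>0 'k"

definition exps :: "nat \<Rightarrow> (nat \<Rightarrow>\<^sub>0 nat) set" where
  "exps n = {\<alpha>. Poly_Mapping.keys \<alpha> \<subseteq> {..<n}}"

definition mtype :: "nat \<Rightarrow> (nat \<Rightarrow>\<^sub>0 nat) \<Rightarrow> (nat \<Rightarrow>\<^sub>0 nat) set" where
  "mtype n \<alpha> = {\<beta>. Poly_Mapping.keys \<beta> \<subseteq> {..<n} \<and>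
      (\<exists>\<pi>. \<pi> permutes {..<n} \<and> Poly_Mapping.lookup \<beta> = Poly_Mapping.lookup \<alpha> \<circ> \<pi>)}"

text \<open>Action sigma.x_i = x_(sigma i) on exponent vectors: the exponent of x_j in
 sigma.x^alpha is alpha(sigma^-1 j).\<close>
definition mon_act :: "(nat \<Rightarrow> nat) \<Rightarrow> (nat \<Rightarrow>\<^sub>0 nat) \<Rightarrow> (nat \<Rightarrow>\<^sub>0 nat)" where
  "mon_act \<sigma> \<alpha> = Abs_poly_mapping (\<lambda>j. Poly_Mapping.lookup \<alpha> (inv \<sigma> j))"

definition poly_act :: "(nat \<Rightarrow> nat) \<Rightarrow> 'k::comm_ring_1 mpoly \<Rightarrow> 'k mpoly" where
  "poly_act \<sigma> f = (\<Sum>\<alpha>\<in>Poly_Mapping.keys f. Poly_Mapping.single (mon_act \<sigma> \<alpha>) (Poly_Mapping.lookup f \<alpha>))"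

definition xmono :: "(nat \<Rightarrow>\<^sub>0 nat) \<Rightarrow> 'k::comm_ring_1 mpoly" where
  "xmono \<alpha> = Poly_Mapping.single \<alpha> 1"

definition ideal_gen :: "'a::comm_ring_1 set \<Rightarrow> 'a set" where
  "ideal_gen S = {p. \<exists>F c. finite F \<and> F \<subseteq> S \<and> p = (\<Sum>s\<in>F. c s * s)}"

definition is_monomial_ideal :: "'k::comm_ring_1 mpoly set \<Rightarrow> bool" where
  "is_monomial_ideal I \<longleftrightarrow> (\<exists>M. I = ideal_gen (xmono ` M))"

definition perm_subgroup :: "nat \<Rightarrow> (nat \<Rightarrow> nat) set \<Rightarrow> bool" where
  "perm_subgroup n G \<longleftrightarrow> (\<forall>\<sigma>\<in>G. \<sigma> permutes {..<n}) \<and> id \<in> G \<and>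
     (\<forall>\<sigma>\<in>G. \<forall>\<tau>\<in>G. \<sigma> \<circ> \<tau> \<in> G) \<and> (\<forall>\<sigma>\<in>G. inv \<sigma> \<in> G)"

text \<open>Evaluation of a polynomial P in variables indexed by exponent vectors
 at a point c (a coefficient vector).\<close>
definition peval :: "(((nat \<Rightarrow>\<^sub>0 nat) \<Rightarrow>\<^sub>0 nat) \<Rightarrow>\<^sub>0 'k::comm_ring_1) \<Rightarrow> ((nat \<Rightarrow>\<^sub>0 nat) \<Rightarrow> 'k) \<Rightarrow> 'k" where
  "peval P c = (\<Sum>m\<in>Poly_Mapping.keys P. Poly_Mapping.lookup P m * (\<Prod>v\<in>Poly_Mapping.keys m. c v ^ Poly_Mapping.lookup m v))"

end

theory Submission imports Defs Jordan_Normal_Form.Determinant begin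

definition mon :: "((nat \<Rightarrow>\<^sub>0 nat) \<Rightarrow>\<^sub>0 nat) \<Rightarrow> ((nat \<Rightarrow>\<^sub>0 nat) \<Rightarrow> 'k::comm_ring_1) \<Rightarrow> 'k" where
  "mon m c = (\<Prod>v\<in>Poly_Mapping.keys m. c v ^ Poly_Mapping.lookup m v)"

lemma mon_superset: "finite S \<Longrightarrow> Poly_Mapping.keys m \<subseteq> S \<Longrightarrow>
   mon m c = (\<Prod>v\<in>S. c v ^ Poly_Mapping.lookup m v)"
  unfolding mon_def
  by (rule prod.mono_neutral_left) (auto simp: in_keys_iff)

lemma mon_add: "mon (a + b) c = mon a c * mon b c"
proof -
  let ?S = "Poly_Mapping.keys a \<union> Poly_Mapping.keys b"
  have "mon (a + b) c = (\<Prod>v\<in>?S. c v ^ Poly_Mapping.lookup (a+b) v)"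
    by (rule mon_superset) (auto simp: keys_add Poly_Mapping.keys_add)
  also have "\<dots> = (\<Prod>v\<in>?S. c v ^ Poly_Mapping.lookup a v) * (\<Prod>v\<in>?S. c v ^ Poly_Mapping.lookup b v)"
    by (simp add: lookup_add power_add prod.distrib)
  also have "\<dots> = mon a c * mon b c"
    by (subst (1 2) mon_superset[of ?S]) auto
  finally show ?thesis .
qed

lemma mon_single: "mon (Poly_Mapping.single v 1) c = c v"
  unfolding mon_def by simp

lemma mon_zero: "mon 0 c = 1" unfolding mon_def by simp

lemma mon_sum: "finite I \<Longrightarrow> mon (\<Sum>i\<in>I. Poly_Mapping.single (b i) 1) c = (\<Prod>i\<in>I. c (b i))"
  by (induction I rule: finite_induct) (auto simp: mon_add mon_single[simplified] mon_zero)

lemma peval_superset: "finite S \<Longrightarrow> Poly_Mapping.keys P \<subseteq> S \<Longrightarrow>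
   peval P c = (\<Sum>m\<in>S. Poly_Mapping.lookup P m * mon m c)"
  unfolding peval_def mon_def[symmetric]
  by (rule sum.mono_neutral_left) (auto simp: in_keys_iff)

lemma peval_add: "peval (P + Q) c = peval P c + peval Q c"
proof -
  let ?S = "Poly_Mapping.keys P \<union> Poly_Mapping.keys Q"
  have "peval (P + Q) c = (\<Sum>m\<in>?S. Poly_Mapping.lookup (P+Q) m * mon m c)"
    by (rule peval_superset) (auto simp: Poly_Mapping.keys_add)
  also have "\<dots> = (\<Sum>m\<in>?S. Poly_Mapping.lookup P m * mon m c) + (\<Sum>m\<in>?S. Poly_Mapping.lookup Q m * mon m c)"
    by (simp add: lookup_add distrib_right sum.distrib)
  also have "\<dots> = peval P c + peval Q c"
    by (subst (1 2) peval_superset[of ?S]) auto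
  finally show ?thesis .
qed

lemma peval_zero: "peval 0 c = 0" unfolding peval_def by simp

lemma peval_single: "peval (Poly_Mapping.single m a) c = a * mon m c"
  unfolding peval_def mon_def by (cases "a = 0") auto

lemma peval_sum: "finite I \<Longrightarrow> peval (\<Sum>i\<in>I. Q i) c = (\<Sum>i\<in>I. peval (Q i) c)"
  by (induction I rule: finite_induct) (auto simp: peval_add peval_zero)


lemma lookup_scale: "Poly_Mapping.lookup (Poly_Mapping.single 0 a * p) k = (a::'a::comm_ring_1) * Poly_Mapping.lookup p k"
  by (simp add: mult_map_scale_conv_mult[symmetric] map.rep_eq when_def)

lemma perm_fix_out: "\<sigma> permutes {..<n} \<Longrightarrow> \<not> j < n \<Longrightarrow> \<sigma> j = j"
  by (simp add: permutes_def)

lemma lookup_mon_act: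
  assumes s: "\<sigma> permutes {..<n}"
  shows "Poly_Mapping.lookup (mon_act \<sigma> \<alpha>) = Poly_Mapping.lookup \<alpha> \<circ> Hilbert_Choice.inv \<sigma>"
proof -
  have b: "bij \<sigma>" using s by (rule permutes_bij)
  have "{j. Poly_Mapping.lookup \<alpha> (Hilbert_Choice.inv \<sigma> j) \<noteq> 0} \<subseteq> \<sigma> ` Poly_Mapping.keys \<alpha>"
  proof
    fix j assume "j \<in> {j. Poly_Mapping.lookup \<alpha> (Hilbert_Choice.inv \<sigma> j) \<noteq> 0}"
    hence "Hilbert_Choice.inv \<sigma> j \<in> Poly_Mapping.keys \<alpha>" by (simp add: in_keys_iff)
    moreover have "\<sigma> (Hilbert_Choice.inv \<sigma> j) = j" using b by (simp add: bij_is_surj surj_f_inv_f)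
    ultimately show "j \<in> \<sigma> ` Poly_Mapping.keys \<alpha>" by force
  qed
  hence "finite {j. Poly_Mapping.lookup \<alpha> (Hilbert_Choice.inv \<sigma> j) \<noteq> 0}"
    by (rule finite_subset) simp
  thus ?thesis unfolding mon_act_def by (simp add: comp_def)
qed

lemma mon_act_inv1:
  assumes s: "\<sigma> permutes {..<n}"
  shows "mon_act (Hilbert_Choice.inv \<sigma>) (mon_act \<sigma> \<alpha>) = \<alpha>"
proof -
  have b: "bij \<sigma>" using s by (rule permutes_bij)
  have s': "Hilbert_Choice.inv \<sigma> permutes {..<n}" using s by (rule permutes_inv)
  show ?thesis
    by (rule poly_mapping_eqI)
       (simp add: lookup_mon_act[OF s'] lookup_mon_act[OF s] inv_inv_eq[OF b] bij_is_inj[OF b])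
qed

lemma mon_act_inv2:
  assumes s: "\<sigma> permutes {..<n}"
  shows "mon_act \<sigma> (mon_act (Hilbert_Choice.inv \<sigma>) \<alpha>) = \<alpha>"
proof -
  have b: "bij \<sigma>" using s by (rule permutes_bij)
  have s': "Hilbert_Choice.inv \<sigma> permutes {..<n}" using s by (rule permutes_inv)
  show ?thesis
    by (rule poly_mapping_eqI)
       (simp add: lookup_mon_act[OF s'] lookup_mon_act[OF s] inv_inv_eq[OF b] bij_is_surj[OF b] surj_f_inv_f)
qed

lemma lookup_poly_act:
  assumes s: "\<sigma> permutes {..<n}"
  shows "Poly_Mapping.lookup (poly_act \<sigma> f) \<gamma> = Poly_Mapping.lookup f (mon_act (Hilbert_Choice.inv \<sigma>) \<gamma>)"
proof -
  have eq: "\<And>\<alpha>. (mon_act \<sigma> \<alpha> = \<gamma>) = (\<alpha> = mon_act (Hilbert_Choice.inv \<sigma>) \<gamma>)"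
    using mon_act_inv1[OF s] mon_act_inv2[OF s] by metis
  have "Poly_Mapping.lookup (poly_act \<sigma> f) \<gamma> =
     (\<Sum>\<alpha>\<in>Poly_Mapping.keys f. if \<alpha> = mon_act (Hilbert_Choice.inv \<sigma>) \<gamma> then Poly_Mapping.lookup f \<alpha> else 0)"
    unfolding poly_act_def lookup_sum lookup_single eq by (simp add: when_def eq_commute)
  also have "\<dots> = Poly_Mapping.lookup f (mon_act (Hilbert_Choice.inv \<sigma>) \<gamma>)"
    by (simp add: in_keys_iff)
  finally show ?thesis .
qed

lemma mtype_trans: "\<beta> \<in> mtype n \<alpha> \<Longrightarrow> \<gamma> \<in> mtype n \<beta> \<Longrightarrow> \<gamma> \<in> mtype n \<alpha>"
  unfolding mtype_def
  by (auto intro: permutes_compose simp: comp_assoc)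

lemma mon_act_mtype:
  assumes s: "\<sigma> permutes {..<n}" and k: "Poly_Mapping.keys \<beta> \<subseteq> {..<n}"
  shows "mon_act \<sigma> \<beta> \<in> mtype n \<beta>"
proof -
  have s': "Hilbert_Choice.inv \<sigma> permutes {..<n}" using s by (rule permutes_inv)
  have "Poly_Mapping.keys (mon_act \<sigma> \<beta>) \<subseteq> {..<n}"
  proof
    fix j assume "j \<in> Poly_Mapping.keys (mon_act \<sigma> \<beta>)"
    hence "Hilbert_Choice.inv \<sigma> j \<in> Poly_Mapping.keys \<beta>" by (simp add: in_keys_iff lookup_mon_act[OF s])
    hence "Hilbert_Choice.inv \<sigma> j < n" using k by auto
    thus "j \<in> {..<n}" using perm_fix_out[OF s'] by (metis lessThan_iff)
  qed
  thus ?thesis unfolding mtype_def using s' lookup_mon_act[OF s] by blast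
qed

lemma ideal_gen_mem: "s \<in> S \<Longrightarrow> s \<in> ideal_gen S"
  unfolding ideal_gen_def
  by (rule CollectI, rule exI[of _ "{s}"], rule exI[of _ "\<lambda>_. 1"]) simp

lemma ideal_gen_zero: "0 \<in> ideal_gen S"
  unfolding ideal_gen_def by (rule CollectI, rule exI[of _ "{}"]) simp

lemma ideal_gen_add: assumes "p \<in> ideal_gen S" "q \<in> ideal_gen S" shows "p + q \<in> ideal_gen S"
proof -
  obtain F c where F: "finite F" "F \<subseteq> S" "p = (\<Sum>s\<in>F. c s * s)" using assms(1) unfolding ideal_gen_def by blast
  obtain F' c' where F': "finite F'" "F' \<subseteq> S" "q = (\<Sum>s\<in>F'. c' s * s)" using assms(2) unfolding ideal_gen_def by blast
  have "p = (\<Sum>s\<in>F \<union> F'. (if s \<in> F then c s else 0) * s)"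
  proof -
    have "(\<Sum>s\<in>F \<union> F'. (if s \<in> F then c s else 0) * s) = (\<Sum>s\<in>F \<union> F'. if s \<in> F then c s * s else 0)"
      by (rule sum.cong) auto
    also have "\<dots> = (\<Sum>s\<in>(F \<union> F') \<inter> F. c s * s)" using sum.inter_restrict[of "F \<union> F'" "\<lambda>s. c s * s" F] F F' by simp
    also have "(F \<union> F') \<inter> F = F" by auto
    finally show ?thesis using F by simp
  qed
  moreover have "q = (\<Sum>s\<in>F \<union> F'. (if s \<in> F' then c' s else 0) * s)"
  proof -
    have "(\<Sum>s\<in>F \<union> F'. (if s \<in> F' then c' s else 0) * s) = (\<Sum>s\<in>F \<union> F'. if s \<in> F' then c' s * s else 0)"
      by (rule sum.cong) auto
    also have "\<dots> = (\<Sum>s\<in>(F \<union> F') \<inter> F'. c' s * s)" using sum.inter_restrict[of "F \<union> F'" "\<lambda>s. c' s * s" F'] F F' by simp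
    also have "(F \<union> F') \<inter> F' = F'" by auto
    finally show ?thesis using F' by simp
  qed
  ultimately have "p + q = (\<Sum>s\<in>F \<union> F'. ((if s \<in> F then c s else 0) + (if s \<in> F' then c' s else 0)) * s)"
    by (simp add: sum.distrib distrib_right)
  moreover have "finite (F \<union> F')" "F \<union> F' \<subseteq> S" using F F' by auto
  ultimately show ?thesis unfolding ideal_gen_def mem_Collect_eq
    by (intro exI[of _ "F \<union> F'"] exI[of _ "\<lambda>s. (if s \<in> F then c s else 0) + (if s \<in> F' then c' s else 0)"]) simp
qed

lemma ideal_gen_mult: assumes "p \<in> ideal_gen S" shows "r * p \<in> ideal_gen S"
proof -
  obtain F c where F: "finite F" "F \<subseteq> S" "p = (\<Sum>s\<in>F. c s * s)" using assms(1) unfolding ideal_gen_def by blast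
  hence "r * p = (\<Sum>s\<in>F. (r * c s) * s)" by (simp add: sum_distrib_left mult.assoc)
  thus ?thesis unfolding ideal_gen_def mem_Collect_eq using F
    by (intro exI[of _ F] exI[of _ "\<lambda>s. r * c s"]) simp
qed

lemma ideal_gen_sum: "finite I \<Longrightarrow> (\<And>i. i \<in> I \<Longrightarrow> g i \<in> ideal_gen S) \<Longrightarrow> (\<Sum>i\<in>I. r i * g i) \<in> ideal_gen S"
proof (induction I rule: finite_induct)
  case empty
  then show ?case by (simp add: ideal_gen_zero)
next
  case (insert x F)
  have "r x * g x \<in> ideal_gen S" by (rule ideal_gen_mult) (simp add: insert.prems)
  moreover have "(\<Sum>i\<in>F. r i * g i) \<in> ideal_gen S" using insert by simp
  ultimately show ?case using insert.hyps by (simp add: ideal_gen_add)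
qed

lemma ideal_gen_mono: assumes "S \<subseteq> ideal_gen S'" shows "ideal_gen S \<subseteq> ideal_gen S'"
proof
  fix p assume "p \<in> ideal_gen S"
  then obtain F c where F: "finite F" "F \<subseteq> S" "p = (\<Sum>s\<in>F. c s * s)" unfolding ideal_gen_def by blast
  have "\<And>s. s \<in> F \<Longrightarrow> s \<in> ideal_gen S'" using F(2) assms by blast
  hence "(\<Sum>s\<in>F. c s * s) \<in> ideal_gen S'" using F(1) by (intro ideal_gen_sum)
  thus "p \<in> ideal_gen S'" using F(3) by simp
qed


theorem theorem1p1:
  fixes n :: nat and A :: "(nat \<Rightarrow>\<^sub>0 nat) set" and G :: "(nat \<Rightarrow> nat) set"
  assumes inf: "infinite (UNIV :: 'k::field set)"
    and A_fin: "finite A" and A_ne: "A \<noteq> {}" and A_sub: "A \<subseteq> exps n"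
    and A_type: "\<forall>\<alpha>\<in>A. \<forall>\<beta>\<in>A. \<beta> \<in> mtype n \<alpha>"
    and G: "perm_subgroup n G"
    and trans: "\<forall>\<alpha>\<in>A. \<forall>\<beta>\<in>mtype n \<alpha>. \<forall>\<gamma>\<in>mtype n \<alpha>. \<exists>\<sigma>\<in>G. mon_act \<sigma> \<beta> = \<gamma>"
  shows "\<exists>P :: ((nat \<Rightarrow>\<^sub>0 nat) \<Rightarrow>\<^sub>0 nat) \<Rightarrow>\<^sub>0 'k.
           (\<exists>f :: 'k mpoly. Poly_Mapping.keys f \<subseteq> A \<and> peval P (Poly_Mapping.lookup f) \<noteq> 0) \<and>
           (\<forall>f :: 'k mpoly. Poly_Mapping.keys f \<subseteq> A \<and> peval P (Poly_Mapping.lookup f) \<noteq> 0 \<longrightarrow>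
              is_monomial_ideal (ideal_gen ((\<lambda>\<sigma>. poly_act \<sigma> f) ` G)) \<and>
              (\<forall>\<alpha>\<in>Poly_Mapping.keys f. ideal_gen ((\<lambda>\<sigma>. poly_act \<sigma> f) ` G)
                              = ideal_gen ((\<lambda>\<sigma>. xmono (mon_act \<sigma> \<alpha>)) ` G)) \<and>
              (\<forall>\<alpha>\<in>A. ideal_gen ((\<lambda>\<sigma>. poly_act \<sigma> f) ` G) = ideal_gen (xmono ` mtype n \<alpha>)))"
proof -
  obtain \<alpha>0 where a0: "\<alpha>0 \<in> A" using A_ne by blast
  define T where "T = mtype n \<alpha>0"
  have Gperm: "\<And>\<sigma>. \<sigma> \<in> G \<Longrightarrow> \<sigma> permutes {..<n}" using G unfolding perm_subgroup_def by blast
  have AT: "A \<subseteq> T" using A_type a0 unfolding T_def by blast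
  have a0T: "\<alpha>0 \<in> T" using AT a0 by blast
  have Tkeys: "\<And>\<beta>. \<beta> \<in> T \<Longrightarrow> Poly_Mapping.keys \<beta> \<subseteq> {..<n}" by (simp add: T_def mtype_def)
  have Tclosed: "\<And>\<sigma> \<beta>. \<sigma> \<in> G \<Longrightarrow> \<beta> \<in> T \<Longrightarrow> mon_act \<sigma> \<beta> \<in> T"
  proof -
    fix \<sigma> \<beta> assume s: "\<sigma> \<in> G" and b: "\<beta> \<in> T"
    have "mon_act \<sigma> \<beta> \<in> mtype n \<beta>" by (rule mon_act_mtype[OF Gperm[OF s] Tkeys[OF b]])
    thus "mon_act \<sigma> \<beta> \<in> T" using b mtype_trans unfolding T_def by blast
  qed
  have Ttrans: "\<And>\<beta> \<gamma>. \<beta> \<in> T \<Longrightarrow> \<gamma> \<in> T \<Longrightarrow> \<exists>\<sigma>\<in>G. mon_act \<sigma> \<beta> = \<gamma>"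
    using trans a0 unfolding T_def by blast
  have orbit: "\<And>\<alpha>. \<alpha> \<in> T \<Longrightarrow> (\<lambda>\<sigma>. mon_act \<sigma> \<alpha>) ` G = T"
  proof -
    fix \<alpha> assume a: "\<alpha> \<in> T"
    show "(\<lambda>\<sigma>. mon_act \<sigma> \<alpha>) ` G = T"
    proof
      show "(\<lambda>\<sigma>. mon_act \<sigma> \<alpha>) ` G \<subseteq> T" using Tclosed a by blast
      show "T \<subseteq> (\<lambda>\<sigma>. mon_act \<sigma> \<alpha>) ` G"
      proof
        fix t assume "t \<in> T"
        then obtain \<sigma> where "\<sigma> \<in> G" "mon_act \<sigma> \<alpha> = t" using Ttrans a by blast
        thus "t \<in> (\<lambda>\<sigma>. mon_act \<sigma> \<alpha>) ` G" by blast
      qed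
    qed
  qed
  have finG: "finite G"
  proof (rule finite_subset)
    show "G \<subseteq> {\<sigma>. \<sigma> permutes {..<n}}" using Gperm by blast
    show "finite {\<sigma>. \<sigma> permutes {..<n}}" by (rule finite_permutations) simp
  qed
  have finT: "finite T" using orbit[OF a0T] finG by (metis finite_imageI)
  have T_eq: "\<And>\<alpha>. \<alpha> \<in> A \<Longrightarrow> mtype n \<alpha> = T"
  proof -
    fix \<alpha> assume a: "\<alpha> \<in> A"
    have 1: "\<alpha> \<in> mtype n \<alpha>0" using A_type a a0 by blast
    have 2: "\<alpha>0 \<in> mtype n \<alpha>" using A_type a a0 by blast
    show "mtype n \<alpha> = T" unfolding T_def using mtype_trans[OF 1] mtype_trans[OF 2] by blast
  qed
  define sel where "sel t = (SOME \<sigma>. \<sigma> \<in> G \<and> mon_act \<sigma> \<alpha>0 = t)" for t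
  have sel: "sel t \<in> G \<and> mon_act (sel t) \<alpha>0 = t" if t: "t \<in> T" for t
  proof -
    have "\<exists>\<sigma>. \<sigma> \<in> G \<and> mon_act \<sigma> \<alpha>0 = t" using Ttrans[OF a0T t] by blast
    thus ?thesis unfolding sel_def by (rule someI_ex)
  qed
  define N where "N = card T"
  obtain e where e: "bij_betw e {0..<N} T" using ex_bij_betw_nat_finite[OF finT] N_def by blast
  have eT: "\<And>i. i < N \<Longrightarrow> e i \<in> T" using e unfolding bij_betw_def by auto
  have einj: "\<And>i j. i < N \<Longrightarrow> j < N \<Longrightarrow> e i = e j \<Longrightarrow> i = j"
    using e unfolding bij_betw_def inj_on_def by auto
  have esurj: "\<And>t. t \<in> T \<Longrightarrow> \<exists>j<N. e j = t"
    using e unfolding bij_betw_def by (metis atLeastLessThan_iff imageE)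
  define \<sigma>s where "\<sigma>s i = sel (e i)" for i
  have \<sigma>G: "\<And>i. i < N \<Longrightarrow> \<sigma>s i \<in> G" using sel eT unfolding \<sigma>s_def by blast
  have \<sigma>P: "\<And>i. i < N \<Longrightarrow> \<sigma>s i permutes {..<n}" using \<sigma>G Gperm by blast
  have \<sigma>a: "\<And>i. i < N \<Longrightarrow> mon_act (\<sigma>s i) \<alpha>0 = e i" using sel eT unfolding \<sigma>s_def by blast
  define \<beta> where "\<beta> i j = mon_act (Hilbert_Choice.inv (\<sigma>s i)) (e j)" for i j
  define Mc where "Mc c = mat N N (\<lambda>(i,j). c (\<beta> i j))" for c :: "(nat \<Rightarrow>\<^sub>0 nat) \<Rightarrow> 'k"
  have Mc_carrier: "\<And>c. Mc c \<in> carrier_mat N N" unfolding Mc_def by simp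
  define P :: "((nat \<Rightarrow>\<^sub>0 nat) \<Rightarrow>\<^sub>0 nat) \<Rightarrow>\<^sub>0 'k" where
    "P = (\<Sum>p\<in>{p. p permutes {0..<N}}.
           Poly_Mapping.single (\<Sum>i\<in>{0..<N}. Poly_Mapping.single (\<beta> i (p i)) (1::nat)) (signof p))"
  have Peval: "peval P c = det (Mc c)" for c
  proof -
    have "peval P c = (\<Sum>p\<in>{p. p permutes {0..<N}}. signof p * (\<Prod>i\<in>{0..<N}. c (\<beta> i (p i))))"
      unfolding P_def by (simp add: peval_sum finite_permutations peval_single mon_sum[simplified])
    also have "\<dots> = (\<Sum>p\<in>{p. p permutes {0..<N}}. signof p * (\<Prod>i\<in>{0..<N}. Mc c $$ (i, p i)))"
    proof (rule sum.cong[OF refl])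
      fix p assume "p \<in> {p. p permutes {0..<N}}"
      hence "\<And>i. i < N \<Longrightarrow> p i < N" using permutes_in_image by fastforce
      thus "signof p * (\<Prod>i\<in>{0..<N}. c (\<beta> i (p i))) = signof p * (\<Prod>i\<in>{0..<N}. Mc c $$ (i, p i))"
        unfolding Mc_def by (intro arg_cong[where f="\<lambda>x. signof p * x"] prod.cong) auto
    qed
    also have "\<dots> = det (Mc c)" by (rule det_def'[OF Mc_carrier, symmetric])
    finally show ?thesis .
  qed
  show ?thesis
  proof (intro exI[of _ P] conjI)
    define f0 :: "'k mpoly" where "f0 = Poly_Mapping.single \<alpha>0 1"
    have "Mc (Poly_Mapping.lookup f0) = 1\<^sub>m N"
    proof (rule eq_matI)
      fix i j assume i: "i < dim_row (1\<^sub>m N :: 'k mat)" and j: "j < dim_col (1\<^sub>m N :: 'k mat)"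
      hence i: "i < N" and j: "j < N" by auto
      have "(\<alpha>0 = \<beta> i j) = (e i = e j)"
        unfolding \<beta>_def using mon_act_inv1[OF \<sigma>P[OF i]] mon_act_inv2[OF \<sigma>P[OF i]] \<sigma>a[OF i] by metis
      also have "\<dots> = (i = j)" using einj i j by blast
      finally have "(\<alpha>0 = \<beta> i j) = (i = j)" .
      thus "Mc (Poly_Mapping.lookup f0) $$ (i, j) = 1\<^sub>m N $$ (i, j)"
        unfolding Mc_def f0_def using i j by (simp add: lookup_single when_def)
    qed (auto simp: Mc_def)
    hence "peval P (Poly_Mapping.lookup f0) = 1" by (simp add: Peval)
    moreover have "Poly_Mapping.keys f0 \<subseteq> A" unfolding f0_def using a0 by simp
    ultimately show "\<exists>f :: 'k mpoly. Poly_Mapping.keys f \<subseteq> A \<and> peval P (Poly_Mapping.lookup f) \<noteq> 0" by force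
  next
    show "\<forall>f :: 'k mpoly. Poly_Mapping.keys f \<subseteq> A \<and> peval P (Poly_Mapping.lookup f) \<noteq> 0 \<longrightarrow>
              is_monomial_ideal (ideal_gen ((\<lambda>\<sigma>. poly_act \<sigma> f) ` G)) \<and>
              (\<forall>\<alpha>\<in>Poly_Mapping.keys f. ideal_gen ((\<lambda>\<sigma>. poly_act \<sigma> f) ` G)
                              = ideal_gen ((\<lambda>\<sigma>. xmono (mon_act \<sigma> \<alpha>)) ` G)) \<and>
              (\<forall>\<alpha>\<in>A. ideal_gen ((\<lambda>\<sigma>. poly_act \<sigma> f) ` G) = ideal_gen (xmono ` mtype n \<alpha>))"
    proof (intro allI impI)
      fix f :: "'k mpoly"
      assume asm: "Poly_Mapping.keys f \<subseteq> A \<and> peval P (Poly_Mapping.lookup f) \<noteq> 0"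
      hence kf: "Poly_Mapping.keys f \<subseteq> T" using AT by blast
      define M where "M = Mc (Poly_Mapping.lookup f)"
      define d where "d = det M"
      have d0: "d \<noteq> 0" using asm unfolding d_def M_def by (simp add: Peval)
      have Mc: "M \<in> carrier_mat N N" unfolding M_def by (rule Mc_carrier)
      have Mij: "\<And>i j. i < N \<Longrightarrow> j < N \<Longrightarrow> M $$ (i, j) = Poly_Mapping.lookup f (\<beta> i j)"
        unfolding M_def Mc_def by simp
      define I where "I = ideal_gen ((\<lambda>\<sigma>. poly_act \<sigma> f) ` G)"
      have main: "I = ideal_gen (xmono ` T)"
      proof
        show "I \<subseteq> ideal_gen (xmono ` T)" unfolding I_def
        proof (rule ideal_gen_mono, rule subsetI)
          fix q :: "'k mpoly" assume "q \<in> (\<lambda>\<sigma>. poly_act \<sigma> f) ` G"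
          then obtain \<sigma> where s: "\<sigma> \<in> G" and q: "q = poly_act \<sigma> f" by blast
          have "q = (\<Sum>\<alpha>\<in>Poly_Mapping.keys f. Poly_Mapping.single 0 (Poly_Mapping.lookup f \<alpha>) * xmono (mon_act \<sigma> \<alpha>))"
            unfolding q poly_act_def xmono_def by (simp add: mult_single)
          also have "\<dots> \<in> ideal_gen (xmono ` T)"
          proof (rule ideal_gen_sum)
            fix \<alpha> assume "\<alpha> \<in> Poly_Mapping.keys f"
            hence "mon_act \<sigma> \<alpha> \<in> T" using Tclosed[OF s] kf by blast
            thus "xmono (mon_act \<sigma> \<alpha>) \<in> ideal_gen (xmono ` T)" by (intro ideal_gen_mem) blast
          qed simp
          finally show "q \<in> ideal_gen (xmono ` T)" .
        qed
        show "ideal_gen (xmono ` T) \<subseteq> I" unfolding I_def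
        proof (rule ideal_gen_mono, rule subsetI)
          fix q :: "'k mpoly" assume "q \<in> xmono ` T"
          then obtain t where t: "t \<in> T" and q: "q = xmono t" by blast
          obtain k where k: "k < N" and ek: "e k = t" using esurj[OF t] by blast
          define r :: "nat \<Rightarrow> 'k mpoly" where "r i = Poly_Mapping.single 0 (adj_mat M $$ (k, i) / d)" for i
          have "q = (\<Sum>i\<in>{0..<N}. r i * poly_act (\<sigma>s i) f)"
          proof (rule poly_mapping_eqI)
            fix \<gamma>
            have R: "Poly_Mapping.lookup (\<Sum>i\<in>{0..<N}. r i * poly_act (\<sigma>s i) f) \<gamma> =
                (\<Sum>i\<in>{0..<N}. adj_mat M $$ (k, i) / d * Poly_Mapping.lookup f (mon_act (Hilbert_Choice.inv (\<sigma>s i)) \<gamma>))"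
              unfolding lookup_sum r_def lookup_scale
              by (rule sum.cong[OF refl]) (simp add: lookup_poly_act[OF \<sigma>P])
            show "Poly_Mapping.lookup q \<gamma> = Poly_Mapping.lookup (\<Sum>i\<in>{0..<N}. r i * poly_act (\<sigma>s i) f) \<gamma>"
            proof (cases "\<gamma> \<in> T")
              case True
              then obtain j where j: "j < N" and ej: "e j = \<gamma>" using esurj by blast
              have "(\<Sum>i\<in>{0..<N}. adj_mat M $$ (k, i) / d * Poly_Mapping.lookup f (mon_act (Hilbert_Choice.inv (\<sigma>s i)) \<gamma>))
                  = (\<Sum>i\<in>{0..<N}. adj_mat M $$ (k, i) * M $$ (i, j)) / d"
                unfolding sum_divide_distrib
                by (rule sum.cong[OF refl]) (simp add: Mij j \<beta>_def ej)
              also have "(\<Sum>i\<in>{0..<N}. adj_mat M $$ (k, i) * M $$ (i, j)) = (adj_mat M * M) $$ (k, j)"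
                using adj_mat(1)[OF Mc] Mc k j by (simp add: scalar_prod_def)
              also have "\<dots> = (d \<cdot>\<^sub>m 1\<^sub>m N) $$ (k, j)" using adj_mat(3)[OF Mc] d_def by simp
              also have "\<dots> = (if k = j then d else 0)" using k j by simp
              finally have "(\<Sum>i\<in>{0..<N}. adj_mat M $$ (k, i) / d * Poly_Mapping.lookup f (mon_act (Hilbert_Choice.inv (\<sigma>s i)) \<gamma>))
                   = (if k = j then 1 else 0)" using d0 by simp
              moreover have "(t = \<gamma>) = (k = j)" using ek ej einj k j by blast
              ultimately show ?thesis unfolding R q xmono_def by (simp add: lookup_single when_def)
            next
              case False
              have "\<And>i. i \<in> {0..<N} \<Longrightarrow> Poly_Mapping.lookup f (mon_act (Hilbert_Choice.inv (\<sigma>s i)) \<gamma>) = 0"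
              proof -
                fix i assume "i \<in> {0..<N}"
                hence i: "i < N" by simp
                have "mon_act (Hilbert_Choice.inv (\<sigma>s i)) \<gamma> \<notin> T"
                proof
                  assume "mon_act (Hilbert_Choice.inv (\<sigma>s i)) \<gamma> \<in> T"
                  hence "mon_act (\<sigma>s i) (mon_act (Hilbert_Choice.inv (\<sigma>s i)) \<gamma>) \<in> T" using Tclosed \<sigma>G[OF i] by blast
                  thus False using False mon_act_inv2[OF \<sigma>P[OF i]] by simp
                qed
                thus "Poly_Mapping.lookup f (mon_act (Hilbert_Choice.inv (\<sigma>s i)) \<gamma>) = 0"
                  using kf by (auto simp: in_keys_iff)
              qed
              hence "Poly_Mapping.lookup (\<Sum>i\<in>{0..<N}. r i * poly_act (\<sigma>s i) f) \<gamma> = 0" unfolding R by simp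
              moreover have "t \<noteq> \<gamma>" using t False by blast
              ultimately show ?thesis unfolding q xmono_def by (simp add: lookup_single when_def)
            qed
          qed
          also have "\<dots> \<in> ideal_gen ((\<lambda>\<sigma>. poly_act \<sigma> f) ` G)"
          proof (rule ideal_gen_sum)
            fix i assume "i \<in> {0..<N}"
            hence "\<sigma>s i \<in> G" using \<sigma>G by simp
            thus "poly_act (\<sigma>s i) f \<in> ideal_gen ((\<lambda>\<sigma>. poly_act \<sigma> f) ` G)" by (intro ideal_gen_mem) blast
          qed simp
          finally show "q \<in> ideal_gen ((\<lambda>\<sigma>. poly_act \<sigma> f) ` G)" .
        qed
      qed
      show "is_monomial_ideal (ideal_gen ((\<lambda>\<sigma>. poly_act \<sigma> f) ` G)) \<and>
              (\<forall>\<alpha>\<in>Poly_Mapping.keys f. ideal_gen ((\<lambda>\<sigma>. poly_act \<sigma> f) ` G)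
                              = ideal_gen ((\<lambda>\<sigma>. xmono (mon_act \<sigma> \<alpha>)) ` G)) \<and>
              (\<forall>\<alpha>\<in>A. ideal_gen ((\<lambda>\<sigma>. poly_act \<sigma> f) ` G) = ideal_gen (xmono ` mtype n \<alpha>))"
      proof (intro conjI ballI)
        show "is_monomial_ideal (ideal_gen ((\<lambda>\<sigma>. poly_act \<sigma> f) ` G))"
          unfolding is_monomial_ideal_def using main I_def by blast
      next
        fix \<alpha> assume "\<alpha> \<in> Poly_Mapping.keys f"
        hence "\<alpha> \<in> T" using kf by blast
        hence "(\<lambda>\<sigma>. xmono (mon_act \<sigma> \<alpha>) :: 'k mpoly) ` G = xmono ` T"
          using orbit by (metis image_image)
        thus "ideal_gen ((\<lambda>\<sigma>. poly_act \<sigma> f) ` G) = ideal_gen ((\<lambda>\<sigma>. xmono (mon_act \<sigma> \<alpha>)) ` G)"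
          using main I_def by simp
      next
        fix \<alpha> assume "\<alpha> \<in> A"
        thus "ideal_gen ((\<lambda>\<sigma>. poly_act \<sigma> f) ` G) = ideal_gen (xmono ` mtype n \<alpha>)"
          using main I_def T_eq by simp
      qed
    qed
  qed
qed

end
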